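(* Let $n,k,l$ be nonnegative integers with $k+l\le n$ and let $\alpha,\beta>-1$. For each $i=k+l,k+l+1,\ldots,n$, the modified Jacobi polynomial has the Bernstein representation \[ J_{i,k,l}^{(\alpha,\beta)}(x)=\sum_{h=k}^{n-l}c_{ih}B^n_h(x), \] where \[ c_{ih}=\frac{(\alpha+2l+1)_{i-k-l}}{(i-k-l)!}\binom{n}{h}^{-1}\binom{n-k-l}{h-k}\,Q_{i-k-l}(n-l-h;\,\alpha+2l,\,\beta+2k,\,n-k-l)\qquad(h=k,\ldots,n-l). \]
   Context: Pochhammer symbol: $(a)_0=1$, $(a)_j=a(a+1)\cdots(a+j-1)$. Bernstein polynomials: $B^n_j(x)=\binom nj x^j(1-x)^{n-j}$. Shifted Jacobi polynomials: for $a,b>-1$ and $m\ge0$, $R^{(a,b)}_m(x)=\frac{(a+1)_m}{m!}\sum_{j=0}^m\frac{(-m)_j(m+a+b+1)_j}{j!\,(a+1)_j}(1-x)^j$. Modified Jacobi polynomials: $J_{i,k,l}^{(\alpha,\beta)}(x)=(1-x)^l x^k R^{(\alpha+2l,\beta+2k)}_{i-k-l}(x)$ for $i\ge k+l$. Hahn polynomials: for a nonnegative integer $N$, $a,b>-1$ and $m=0,1,\ldots,N$, $Q_m(x;a,b,N)=\sum_{j=0}^m\frac{(-m)_j(m+a+b+1)_j(-x)_j}{j!\,(a+1)_j\,(-N)_j}$. *)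

theory Defs
  imports Complex_Main
begin

definition bernstein :: "nat \<Rightarrow> nat \<Rightarrow> real \<Rightarrow> real" where
  "bernstein n j x = real (n choose j) * x ^ j * (1 - x) ^ (n - j)"

definition shifted_jacobi :: "real \<Rightarrow> real \<Rightarrow> nat \<Rightarrow> real \<Rightarrow> real" where
  "shifted_jacobi a b m x =
     pochhammer (a + 1) m / fact m *
     (\<Sum>j\<le>m. pochhammer (- real m) j * pochhammer (real m + a + b + 1) j
              / (fact j * pochhammer (a + 1) j) * (1 - x) ^ j)"

text \<open>Modified Jacobi polynomial J_{i,k,l}^(alpha,beta)(x), meaningful for i >= k + l.\<close>
definition mod_jacobi :: "real \<Rightarrow> real \<Rightarrow> nat \<Rightarrow> nat \<Rightarrow> nat \<Rightarrow> real \<Rightarrow> real" where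
  "mod_jacobi \<alpha> \<beta> i k l x =
     (1 - x) ^ l * x ^ k * shifted_jacobi (\<alpha> + 2 * real l) (\<beta> + 2 * real k) (i - k - l) x"

text \<open>Hahn polynomial Q_m(x; a, b, N), meaningful for m <= N.\<close>
definition hahn :: "nat \<Rightarrow> real \<Rightarrow> real \<Rightarrow> real \<Rightarrow> nat \<Rightarrow> real" where
  "hahn m x a b N =
     (\<Sum>j\<le>m. pochhammer (- real m) j * pochhammer (real m + a + b + 1) j * pochhammer (- x) j
             / (fact j * pochhammer (a + 1) j * pochhammer (- real N) j))"

end

theory Submission imports Defs begin

lemma pochratio:
  assumes "t \<le> N" "j \<le> N"
  shows "pochhammer (- real t) j / pochhammer (- real N) j = real (t choose j) / real (N choose j)"
proof -
  have e: "pochhammer (- real s) j = (-1)^j * fact j * real (s choose j)" for s :: nat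
    by (simp add: binomial_gbinomial gbinomial_pochhammer)
  have "real (N choose j) \<noteq> 0" using assms by simp
  then show ?thesis unfolding e by simp
qed

lemma chm: "(N choose g) * ((N - g) choose j) = (N choose j) * ((N - j) choose g)"
proof (cases "g + j \<le> N")
  case True
  have 1: "(N choose (g+j)) * ((g+j) choose g) = (N choose g) * ((N - g) choose j)"
    using choose_mult[of g "g+j" N] True by simp
  have 2: "(N choose (g+j)) * ((g+j) choose j) = (N choose j) * ((N - j) choose g)"
    using choose_mult[of j "g+j" N] True by simp
  have "((g+j) choose g) = ((g+j) choose j)"
    using binomial_symmetric[of g "g+j"] by simp
  then show ?thesis using 1 2 by simp
next
  case False
  show ?thesis
  proof (cases "g \<le> N")
    case True
    then have "(N - g choose j) = 0" using False by simp
    moreover have "(N choose j) * (N - j choose g) = 0"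
      using False by (cases "j \<le> N") auto
    ultimately show ?thesis by (metis mult_0_right)
  next
    case g: False
    then have "(N choose g) = 0" by simp
    moreover have "(N - j choose g) = 0" using g by simp
    ultimately show ?thesis by (metis mult_0 mult_0_right)
  qed
qed

lemma bsum:
  fixes x :: real
  assumes "j \<le> N"
  shows "(\<Sum>g\<le>N. real (N choose g) * real ((N - g) choose j) * x ^ g * (1 - x) ^ (N - g))
     = real (N choose j) * (1 - x) ^ j"
proof -
  have "(\<Sum>g\<le>N. real (N choose g) * real ((N - g) choose j) * x ^ g * (1 - x) ^ (N - g))
     = (\<Sum>g\<le>N. real (N choose j) * (real ((N - j) choose g) * x ^ g * (1 - x) ^ (N - g)))"
    by (rule sum.cong) (simp_all add: of_nat_mult[symmetric] chm del: of_nat_mult)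
  also have "\<dots> = real (N choose j) * (\<Sum>g\<le>N. real ((N - j) choose g) * x ^ g * (1 - x) ^ (N - g))"
    by (simp add: sum_distrib_left)
  also have "(\<Sum>g\<le>N. real ((N - j) choose g) * x ^ g * (1 - x) ^ (N - g))
      = (\<Sum>g\<le>N - j. real ((N - j) choose g) * x ^ g * (1 - x) ^ (N - g))"
    by (rule sum.mono_neutral_right) auto
  also have "\<dots> = (\<Sum>g\<le>N - j. (1-x)^j * (real ((N - j) choose g) * x ^ g * (1 - x) ^ (N - j - g)))"
  proof (rule sum.cong[OF refl])
    fix g assume "g \<in> {..N - j}"
    then have "N - g = j + (N - j - g)" using assms by auto
    then show "real ((N - j) choose g) * x ^ g * (1 - x) ^ (N - g) = (1-x)^j * (real ((N - j) choose g) * x ^ g * (1 - x) ^ (N - j - g))"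
      by (simp add: power_add)
  qed
  also have "\<dots> = (1-x)^j * (x + (1 - x))^(N-j)"
    unfolding binomial_ring[of x "1-x" "N-j"] sum_distrib_left by (simp add: mult_ac)
  finally show ?thesis by simp
qed

theorem lemma1:
  fixes n k l i :: nat and \<alpha> \<beta> x :: real
  assumes "k + l \<le> n" and "\<alpha> > -1" and "\<beta> > -1"
    and "k + l \<le> i" and "i \<le> n"
  shows "mod_jacobi \<alpha> \<beta> i k l x =
    (\<Sum>h = k..n - l.
        (pochhammer (\<alpha> + 2 * real l + 1) (i - k - l) / fact (i - k - l)
         / real (n choose h) * real ((n - k - l) choose (h - k))
         * hahn (i - k - l) (real (n - l - h)) (\<alpha> + 2 * real l) (\<beta> + 2 * real k) (n - k - l))
        * bernstein n h x)"
proof -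
  define m where "m = i - k - l"
  define N where "N = n - k - l"
  define a where "a = \<alpha> + 2 * real l"
  define b where "b = \<beta> + 2 * real k"
  define P where "P = pochhammer (a + 1) m / fact m"
  define c where "c j = pochhammer (- real m) j * pochhammer (real m + a + b + 1) j
              / (fact j * pochhammer (a + 1) j)" for j
  have mN: "m \<le> N" using assms unfolding m_def N_def by simp
  have hahn_eq: "hahn m (real (N - g)) a b N = (\<Sum>j\<le>m. c j * (real ((N - g) choose j) / real (N choose j)))"
    if "g \<le> N" for g
    unfolding hahn_def
  proof (rule sum.cong[OF refl])
    fix j assume "j \<in> {..m}"
    then have "j \<le> N" using mN by simp
    have "pochhammer (- real m) j * pochhammer (real m + a + b + 1) j * pochhammer (- real (N - g)) j /
        (fact j * pochhammer (a + 1) j * pochhammer (- real N) j)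
       = c j * (pochhammer (- real (N - g)) j / pochhammer (- real N) j)"
      unfolding c_def by simp
    also have "\<dots> = c j * (real ((N - g) choose j) / real (N choose j))"
      using pochratio[of "N - g" N j] \<open>j \<le> N\<close> by simp
    finally show "pochhammer (- real m) j * pochhammer (real m + a + b + 1) j * pochhammer (- real (N - g)) j /
        (fact j * pochhammer (a + 1) j * pochhammer (- real N) j) = c j * (real ((N - g) choose j) / real (N choose j))" .
  qed
  have key: "(\<Sum>g\<le>N. real (N choose g) * hahn m (real (N - g)) a b N * x ^ g * (1 - x) ^ (N - g))
      = (\<Sum>j\<le>m. c j * (1 - x) ^ j)"
  proof -
    have "(\<Sum>g\<le>N. real (N choose g) * hahn m (real (N - g)) a b N * x ^ g * (1 - x) ^ (N - g))
      = (\<Sum>g\<le>N. \<Sum>j\<le>m. c j / real (N choose j) * (real (N choose g) * real ((N - g) choose j) * x ^ g * (1 - x) ^ (N - g)))"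
    proof (rule sum.cong[OF refl])
      fix g assume "g \<in> {..N}"
      then have g: "g \<le> N" by simp
      show "real (N choose g) * hahn m (real (N - g)) a b N * x ^ g * (1 - x) ^ (N - g)
       = (\<Sum>j\<le>m. c j / real (N choose j) * (real (N choose g) * real ((N - g) choose j) * x ^ g * (1 - x) ^ (N - g)))"
        unfolding hahn_eq[OF g] sum_distrib_left sum_distrib_right
        by (rule sum.cong[OF refl]) simp
    qed
    also have "\<dots> = (\<Sum>j\<le>m. c j / real (N choose j) * (\<Sum>g\<le>N. real (N choose g) * real ((N - g) choose j) * x ^ g * (1 - x) ^ (N - g)))"
      by (subst sum.swap) (simp add: sum_distrib_left)
    also have "\<dots> = (\<Sum>j\<le>m. c j * (1 - x) ^ j)"
    proof (rule sum.cong[OF refl])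
      fix j assume "j \<in> {..m}"
      then have j: "j \<le> N" using mN by simp
      then have "real (N choose j) \<noteq> 0" by simp
      then show "c j / real (N choose j) * (\<Sum>g\<le>N. real (N choose g) * real ((N - g) choose j) * x ^ g * (1 - x) ^ (N - g)) = c j * (1 - x) ^ j"
        using bsum[OF j, of x] by simp
    qed
    finally show ?thesis .
  qed
  have nk: "n - l = N + k" using assms unfolding N_def by simp
  define F where "F h = (pochhammer (\<alpha> + 2 * real l + 1) (i - k - l) / fact (i - k - l)
         / real (n choose h) * real ((n - k - l) choose (h - k))
         * hahn (i - k - l) (real (n - l - h)) (\<alpha> + 2 * real l) (\<beta> + 2 * real k) (n - k - l))
        * bernstein n h x" for h
  have FF: "F (g + k) = (P / real (n choose (g + k)) * real (N choose g) * hahn m (real (N - g)) a b N)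
           * bernstein n (g + k) x" for g
  proof -
    have "n - l - (g + k) = N - g" unfolding N_def by simp
    then show ?thesis unfolding F_def P_def m_def N_def a_def b_def by simp
  qed
  have "(\<Sum>h = k..n - l.
        (pochhammer (\<alpha> + 2 * real l + 1) (i - k - l) / fact (i - k - l)
         / real (n choose h) * real ((n - k - l) choose (h - k))
         * hahn (i - k - l) (real (n - l - h)) (\<alpha> + 2 * real l) (\<beta> + 2 * real k) (n - k - l))
        * bernstein n h x) = sum F {0 + k..N + k}"
    unfolding F_def nk by simp
  also have "\<dots> = (\<Sum>g = 0..N. F (g + k))"
    by (rule sum.shift_bounds_cl_nat_ivl)
  also have "\<dots> = (\<Sum>g = 0..N. (P / real (n choose (g + k)) * real (N choose g) * hahn m (real (N - g)) a b N)
           * bernstein n (g + k) x)"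
    unfolding FF ..
  also have "\<dots> = (\<Sum>g\<le>N. P * x ^ k * (1 - x) ^ l * (real (N choose g) * hahn m (real (N - g)) a b N * x ^ g * (1 - x) ^ (N - g)))"
    unfolding atLeast0AtMost
  proof (rule sum.cong[OF refl])
    fix g assume "g \<in> {..N}"
    then have g: "g \<le> N" by simp
    then have nz: "real (n choose (g + k)) \<noteq> 0" using assms unfolding N_def by simp
    have e: "n - (g + k) = l + (N - g)" using g assms unfolding N_def by simp
    show "P / real (n choose (g + k)) * real (N choose g) * hahn m (real (N - g)) a b N * bernstein n (g + k) x =
         P * x ^ k * (1 - x) ^ l * (real (N choose g) * hahn m (real (N - g)) a b N * x ^ g * (1 - x) ^ (N - g))"
      unfolding bernstein_def e using nz by (simp add: power_add field_simps)
  qed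
  also have "\<dots> = P * x ^ k * (1 - x) ^ l * (\<Sum>j\<le>m. c j * (1 - x) ^ j)"
    by (simp only: sum_distrib_left[symmetric] key)
  also have "\<dots> = mod_jacobi \<alpha> \<beta> i k l x"
    unfolding mod_jacobi_def shifted_jacobi_def P_def c_def m_def a_def b_def
    by (simp add: mult_ac)
  finally show ?thesis by simp
qed

end
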